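(* Let $\mu=\prod_{i=1}^d\mu_i$ be a product probability measure on $\mathbb{R}^d$, where $\mathrm{d}\mu_i(x_i)=\rho_i(|x_i|)\,\mathrm{d}x_i$ with $\rho_i:[0,\infty)\to(0,\infty)$ continuous. For $i=1,\dots,d$ let $\phi_i:[0,\infty)\to[0,\infty)$ be continuous and strictly increasing with $\phi_i(0)=0$, and set $B=\{x\in\mathbb{R}^d:\ \phi_1(|x_1|)+\cdots+\phi_d(|x_d|)\le1\}$ (which need not be convex). Then for every $f\in\bar{\mathcal{C}}_d$, $\int f\mathbf{1}_B\,\mathrm{d}\mu\ge\big(\int f\,\mathrm{d}\mu\big)\mu(B)$.
   Context: $\mathcal{C}_1$ denotes the set of continuous compactly supported functions $g:\mathbb{R}\to[0,\infty)$ such that for every $c>0$ the set $\{t: g(t)>c\}$ is convex, and $g(t)\le g(0)$ for all $t\in\mathbb{R}$. $\bar{\mathcal{C}}_d$ denotes the set of continuous compactly supported functions $f:\mathbb{R}^d\to[0,\infty)$ such that for every $i$ and every fixed choice of the other $d-1$ coordinates, the function $x_i\mapsto f(x)$ belongs to $\mathcal{C}_1$. *)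

theory Defs
  imports "HOL-Analysis.Analysis" "HOL-Probability.Probability_Measure"
begin

definition compact_supp :: "('a::topological_space \<Rightarrow> real) \<Rightarrow> bool" where
  "compact_supp f \<longleftrightarrow> compact (closure {x. f x \<noteq> 0})"

definition C1 :: "(real \<Rightarrow> real) set" where
  "C1 = {g. continuous_on UNIV g \<and> compact_supp g \<and> (\<forall>t. g t \<ge> 0)
            \<and> (\<forall>c>0. convex {t. g t > c}) \<and> (\<forall>t. g t \<le> g 0)}"

definition upd_coord :: "real ^ 'n \<Rightarrow> 'n \<Rightarrow> real \<Rightarrow> real ^ 'n" where
  "upd_coord x i t = (\<chi> j. if j = i then t else x $ j)"

text \<open>The class bar C_d of the paper (d = CARD('n)).\<close>
definition Cbar :: "(real ^ 'n \<Rightarrow> real) set" where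
  "Cbar = {f. continuous_on UNIV f \<and> compact_supp f \<and> (\<forall>x. f x \<ge> 0)
            \<and> (\<forall>i x. (\<lambda>t. f (upd_coord x i t)) \<in> C1)}"

end

theory Submission
  imports Defs "HOL-Probability.Probability"
begin

lemma bdd_integrable:
  fixes f :: "'a \<Rightarrow> real"
  assumes "prob_space M" "f \<in> borel_measurable M" "\<And>x. x \<in> space M \<Longrightarrow> \<bar>f x\<bar> \<le> C"
  shows "integrable M f"
proof -
  interpret prob_space M by fact
  show ?thesis
    by (rule integrable_const_bound[where B=C]) (use assms in auto)
qed

lemma corr_1d:
  fixes M :: "real measure" and u v :: "real \<Rightarrow> real"
  assumes P: "prob_space M" and S: "sets M = sets borel"
    and sym: "distr M borel uminus = M"
    and um[measurable]: "u \<in> borel_measurable borel" and vm[measurable]: "v \<in> borel_measurable borel"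
    and ub: "\<And>t. \<bar>u t\<bar> \<le> C" and vb: "\<And>t. \<bar>v t\<bar> \<le> D"
    and umono: "\<And>s t. (0 \<le> s \<and> s \<le> t) \<or> (t \<le> s \<and> s \<le> 0) \<Longrightarrow> u t \<le> u s"
    and vmono: "\<And>s t. \<bar>s\<bar> \<le> \<bar>t\<bar> \<Longrightarrow> v t \<le> v s"
  shows "(\<integral>t. u t * v t \<partial>M) \<ge> (\<integral>t. u t \<partial>M) * (\<integral>t. v t \<partial>M)"
proof -
  interpret prob_space M by fact
  have meq: "measurable M = measurable borel" by (intro ext measurable_cong_sets) (auto simp: S)
  have sp: "space M = UNIV" using sets_eq_imp_space_eq[OF S] by simp
  have int: "integrable M h" if "h \<in> borel_measurable borel" "\<And>t. \<bar>h t\<bar> \<le> K" for h :: "real \<Rightarrow> real" and K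
    by (rule bdd_integrable[OF P, where C=K]) (auto simp: meq that)
  have flip: "(\<integral>t. h (- t) \<partial>M) = (\<integral>t. h t \<partial>M)" if [measurable]: "h \<in> borel_measurable borel" for h :: "real \<Rightarrow> real"
  proof -
    have "(\<integral>t. h t \<partial>M) = (\<integral>t. h t \<partial>distr M borel uminus)" using sym by simp
    also have "\<dots> = (\<integral>t. h (- t) \<partial>M)"
      by (rule integral_distr) (auto simp: meq)
    finally show ?thesis by simp
  qed
  define w where "w t = (u t + u (- t)) / 2" for t
  have wm[measurable]: "w \<in> borel_measurable borel" unfolding w_def by measurable
  have wb: "\<bar>w t\<bar> \<le> C" for t using ub[of t] ub[of "-t"] unfolding w_def by auto
  have veven: "v (- t) = v t" for t using vmono[of t "-t"] vmono[of "-t" t] by auto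
  have wmono: "w t \<le> w s" if "\<bar>s\<bar> \<le> \<bar>t\<bar>" for s t
  proof -
    have "u t + u (-t) = u \<bar>t\<bar> + u (- \<bar>t\<bar>)" by (cases "t \<ge> 0") auto
    moreover have "u s + u (-s) = u \<bar>s\<bar> + u (- \<bar>s\<bar>)" by (cases "s \<ge> 0") auto
    moreover have "u \<bar>t\<bar> \<le> u \<bar>s\<bar>" using umono[of "\<bar>s\<bar>" "\<bar>t\<bar>"] that by auto
    moreover have "u (-\<bar>t\<bar>) \<le> u (-\<bar>s\<bar>)" using umono[of "-\<bar>s\<bar>" "-\<bar>t\<bar>"] that by auto
    ultimately show ?thesis unfolding w_def by auto
  qed
  have iu: "integrable M u" by (rule int[OF um ub])
  have iv: "integrable M v" by (rule int[OF vm vb])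
  have iw: "integrable M w" by (rule int[OF wm wb])
  have iuv: "integrable M (\<lambda>t. u t * v t)"
    by (rule int[of _ "C*D"]) (auto simp: abs_mult intro!: mult_mono ub vb order_trans[OF abs_ge_zero ub])
  have iwv: "integrable M (\<lambda>t. w t * v t)"
    by (rule int[of _ "C*D"]) (auto simp: abs_mult intro!: mult_mono wb vb order_trans[OF abs_ge_zero wb])
  have iu': "integrable M (\<lambda>t. u (-t) * v t)"
    by (rule int[of _ "C*D"]) (auto simp: abs_mult intro!: mult_mono ub vb order_trans[OF abs_ge_zero ub])
  have e1: "(\<integral>t. u (-t) * v t \<partial>M) = (\<integral>t. u t * v t \<partial>M)"
    using flip[of "\<lambda>t. u t * v t"] by (simp add: veven)
  have e2: "(\<integral>t. u (-t) \<partial>M) = (\<integral>t. u t \<partial>M)" using flip[of u] by simp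
  have wv: "(\<integral>t. w t * v t \<partial>M) = (\<integral>t. u t * v t \<partial>M)"
  proof -
    have "(\<integral>t. w t * v t \<partial>M) = (\<integral>t. (u t * v t + u (-t) * v t) / 2 \<partial>M)"
      unfolding w_def by (simp add: algebra_simps add_divide_distrib)
    also have "\<dots> = ((\<integral>t. u t * v t \<partial>M) + (\<integral>t. u (-t) * v t \<partial>M)) / 2"
      using iuv iu' by simp
    finally show ?thesis using e1 by simp
  qed
  have wi: "(\<integral>t. w t \<partial>M) = (\<integral>t. u t \<partial>M)"
  proof -
    have iu2: "integrable M (\<lambda>t. u (-t))" by (rule int[of _ C]) (auto simp: ub)
    have "(\<integral>t. w t \<partial>M) = ((\<integral>t. u t \<partial>M) + (\<integral>t. u (-t) \<partial>M)) / 2"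
      unfolding w_def using iu iu2 by simp
    then show ?thesis using e2 by simp
  qed
  define a where "a = (\<integral>t. w t * v t \<partial>M)"
  define b where "b = (\<integral>t. w t \<partial>M)"
  define c where "c = (\<integral>t. v t \<partial>M)"
  have inner: "(\<integral>s. (w s - w t) * (v s - v t) \<partial>M) = a - w t * c - v t * b + w t * v t" for t
  proof -
    have "(\<integral>s. (w s - w t) * (v s - v t) \<partial>M) = (\<integral>s. w s * v s - w t * v s - v t * w s + w t * v t \<partial>M)"
      by (simp add: algebra_simps)
    also have "\<dots> = (\<integral>s. w s * v s \<partial>M) - (\<integral>s. w t * v s \<partial>M) - (\<integral>s. v t * w s \<partial>M) + (\<integral>s. w t * v t \<partial>M)"
      using iwv iv iw by (simp add: integral_add integral_diff)
    also have "\<dots> = a - w t * c - v t * b + w t * v t"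
      by (simp add: a_def b_def c_def prob_space)
    finally show ?thesis .
  qed
  have nn: "0 \<le> (\<integral>s. (w s - w t) * (v s - v t) \<partial>M)" for t
  proof (rule integral_nonneg_AE, rule AE_I2)
    fix s
    show "0 \<le> (w s - w t) * (v s - v t)"
    proof (cases "\<bar>s\<bar> \<le> \<bar>t\<bar>")
      case True then show ?thesis using wmono[OF True] vmono[OF True] by auto
    next
      case False then have "\<bar>t\<bar> \<le> \<bar>s\<bar>" by auto
      then show ?thesis using wmono[of t s] vmono[of t s] by (auto intro: mult_nonpos_nonpos)
    qed
  qed
  have "0 \<le> (\<integral>t. a - w t * c - v t * b + w t * v t \<partial>M)"
    using nn inner by (intro integral_nonneg_AE) auto
  also have "\<dots> = a - b * c - c * b + a"
    using iwv iv iw by (simp add: a_def b_def c_def prob_space mult.commute)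
  finally have "b * c \<le> a" by simp
  then show ?thesis using wv wi by (simp add: a_def b_def c_def)
qed


lemma abs_integral_le_prob:
  fixes f :: "'a \<Rightarrow> real"
  assumes P: "prob_space M" and i: "integrable M f" and b: "\<And>x. x \<in> space M \<Longrightarrow> \<bar>f x\<bar> \<le> C"
  shows "\<bar>integral\<^sup>L M f\<bar> \<le> C"
proof -
  interpret prob_space M by fact
  have "\<bar>integral\<^sup>L M f\<bar> \<le> (\<integral>x. \<bar>f x\<bar> \<partial>M)" using integral_abs_bound .
  also have "\<dots> \<le> (\<integral>x. C \<partial>M)" using i b by (intro integral_mono) auto
  also have "\<dots> = C" by (simp add: prob_space)
  finally show ?thesis .
qed

lemma corr_PiM:
  fixes M :: "'i \<Rightarrow> real measure" and F G :: "('i \<Rightarrow> real) \<Rightarrow> real"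
  assumes fin: "finite I"
    and P: "\<And>i. prob_space (M i)" and S: "\<And>i. sets (M i) = sets borel"
    and sym: "\<And>i. distr (M i) borel uminus = M i"
    and Fm: "F \<in> borel_measurable (PiM I M)" and Gm: "G \<in> borel_measurable (PiM I M)"
    and Fb: "\<And>x. x \<in> space (PiM I M) \<Longrightarrow> \<bar>F x\<bar> \<le> C"
    and Gb: "\<And>x. x \<in> space (PiM I M) \<Longrightarrow> \<bar>G x\<bar> \<le> D"
    and Fmono: "\<And>x j s t. x \<in> space (PiM I M) \<Longrightarrow> j \<in> I \<Longrightarrow> (0 \<le> s \<and> s \<le> t) \<or> (t \<le> s \<and> s \<le> 0)
                  \<Longrightarrow> F (x(j:=t)) \<le> F (x(j:=s))"
    and Gmono: "\<And>x j s t. x \<in> space (PiM I M) \<Longrightarrow> j \<in> I \<Longrightarrow> \<bar>s\<bar> \<le> \<bar>t\<bar>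
                  \<Longrightarrow> G (x(j:=t)) \<le> G (x(j:=s))"
  shows "(\<integral>x. F x \<partial>PiM I M) * (\<integral>x. G x \<partial>PiM I M) \<le> (\<integral>x. F x * G x \<partial>PiM I M)"
  using fin Fm Gm Fb Gb Fmono Gmono
proof (induction I arbitrary: F G rule: finite_induct)
  case empty
  have "PiM {} M = count_space {\<lambda>_. undefined}" by (rule PiM_empty)
  then show ?case by (simp add: lebesgue_integral_count_space_finite)
next
  case (insert i I)
  interpret product_sigma_finite M
    by (simp add: product_sigma_finite_def P prob_space_imp_sigma_finite)
  have Mi: "sigma_finite_measure (M i)" by (simp add: P prob_space_imp_sigma_finite)
  let ?N = "PiM I M" and ?N' = "PiM (insert i I) M"
  have PN: "prob_space ?N" by (rule prob_space_PiM) (simp add: P)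
  have PN': "prob_space ?N'" by (rule prob_space_PiM) (simp add: P)
  have spi: "space (M j) = UNIV" for j using sets_eq_imp_space_eq[OF S[of j]] by simp
  have upd_sp: "x(i:=y) \<in> space ?N'" if "x \<in> space ?N" for x y
    using that by (auto simp: space_PiM spi PiE_def extensional_def)
  have upd_sp2: "x(j:=y) \<in> space ?N" if "x \<in> space ?N" "j \<in> I" for x y j
    using that by (auto simp: space_PiM spi PiE_def extensional_def)
  have upd_sp3: "x(j:=y) \<in> space ?N'" if "x \<in> space ?N'" "j \<in> insert i I" for x y j
    using that by (auto simp: space_PiM spi PiE_def extensional_def)
  have add: "(\<lambda>(f, y). f(i := y)) \<in> measurable (?N \<Otimes>\<^sub>M M i) ?N'" by (rule measurable_add_dim)
  have mi: "(\<lambda>y. H (x(i:=y))) \<in> borel_measurable (M i)"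
    if "x \<in> space ?N" "H \<in> borel_measurable ?N'" for x and H :: "_ \<Rightarrow> real"
    using measurable_comp[OF measurable_component_update[OF that(1) \<open>i \<notin> I\<close>] that(2)]
    unfolding comp_def .
  have mb: "(\<lambda>y. H (x(i:=y))) \<in> borel_measurable borel"
    if "x \<in> space ?N" "H \<in> borel_measurable ?N'" for x and H :: "_ \<Rightarrow> real"
    using mi[OF that] by (simp add: measurable_cong_sets[OF S refl])
  have mpair: "(\<lambda>(x, y). H (x(i:=y))) \<in> borel_measurable (?N \<Otimes>\<^sub>M M i)"
    if "H \<in> borel_measurable ?N'" for H :: "_ \<Rightarrow> real"
  proof -
    have "H \<circ> (\<lambda>(f, y). f(i := y)) \<in> borel_measurable (?N \<Otimes>\<^sub>M M i)"
      by (rule measurable_comp[OF add that])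
    then show ?thesis by (simp add: comp_def case_prod_beta')
  qed
  have mint: "(\<lambda>x. \<integral>y. H (x(i:=y)) \<partial>M i) \<in> borel_measurable ?N"
    if "H \<in> borel_measurable ?N'" for H :: "_ \<Rightarrow> real"
    using sigma_finite_measure.borel_measurable_lebesgue_integral[OF Mi, of "\<lambda>x y. H (x(i:=y))" ?N] mpair[OF that] by simp
  have intMi: "integrable (M i) (\<lambda>y. H (x(i:=y)))"
    if "x \<in> space ?N" "H \<in> borel_measurable ?N'" "\<And>z. z \<in> space ?N' \<Longrightarrow> \<bar>H z\<bar> \<le> K" for x K and H :: "_ \<Rightarrow> real"
    by (rule bdd_integrable[OF P mi[OF that(1,2)], of K]) (simp add: that(3) upd_sp[OF that(1)])
  define F1 where "F1 x = (\<integral>y. F (x(i:=y)) \<partial>M i)" for x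
  define G1 where "G1 x = (\<integral>y. G (x(i:=y)) \<partial>M i)" for x
  note Fm = insert.prems(1) and Gm = insert.prems(2)
  have Fb: "\<And>z. z \<in> space ?N' \<Longrightarrow> \<bar>F z\<bar> \<le> C" by (rule insert.prems(3))
  have Gb: "\<And>z. z \<in> space ?N' \<Longrightarrow> \<bar>G z\<bar> \<le> D" by (rule insert.prems(4))
  have FGm: "(\<lambda>x. F x * G x) \<in> borel_measurable ?N'" using Fm Gm by measurable
  have FGb: "\<bar>F z * G z\<bar> \<le> C * D" if "z \<in> space ?N'" for z
    using insert.prems(3)[OF that] insert.prems(4)[OF that]
    by (simp add: abs_mult mult_mono order_trans[OF abs_ge_zero])
  have F1m: "F1 \<in> borel_measurable ?N" unfolding F1_def by (rule mint[OF Fm])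
  have G1m: "G1 \<in> borel_measurable ?N" unfolding G1_def by (rule mint[OF Gm])
  have F1b: "\<bar>F1 x\<bar> \<le> C" if "x \<in> space ?N" for x
    unfolding F1_def
    by (rule abs_integral_le_prob[OF P intMi[OF that Fm Fb]])
       (auto intro: Fb upd_sp[OF that] simp del: fun_upd_apply)
  have G1b: "\<bar>G1 x\<bar> \<le> D" if "x \<in> space ?N" for x
    unfolding G1_def
    by (rule abs_integral_le_prob[OF P intMi[OF that Gm Gb]])
       (auto intro: Gb upd_sp[OF that] simp del: fun_upd_apply)
  have F1mono: "F1 (x(j:=t)) \<le> F1 (x(j:=s))"
    if x: "x \<in> space ?N" and j: "j \<in> I" and st: "(0 \<le> s \<and> s \<le> t) \<or> (t \<le> s \<and> s \<le> 0)" for x j s t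
  proof -
    have ji: "j \<noteq> i" using j insert.hyps by auto
    show ?thesis unfolding F1_def
    proof (rule integral_mono)
      show "integrable (M i) (\<lambda>y. F (x(j := t, i := y)))"
        by (rule intMi[OF upd_sp2[OF x j] Fm Fb])
      show "integrable (M i) (\<lambda>y. F (x(j := s, i := y)))"
        by (rule intMi[OF upd_sp2[OF x j] Fm Fb])
      fix y
      have "F (x(i := y, j := t)) \<le> F (x(i := y, j := s))"
        by (rule insert.prems(5)[OF upd_sp[OF x] _ st]) (simp add: j)
      then show "F (x(j := t, i := y)) \<le> F (x(j := s, i := y))"
        using ji by (simp add: fun_upd_twist)
    qed
  qed
  have G1mono: "G1 (x(j:=t)) \<le> G1 (x(j:=s))"
    if x: "x \<in> space ?N" and j: "j \<in> I" and st: "\<bar>s\<bar> \<le> \<bar>t\<bar>" for x j s t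
  proof -
    have ji: "j \<noteq> i" using j insert.hyps by auto
    show ?thesis unfolding G1_def
    proof (rule integral_mono)
      show "integrable (M i) (\<lambda>y. G (x(j := t, i := y)))"
        by (rule intMi[OF upd_sp2[OF x j] Gm Gb])
      show "integrable (M i) (\<lambda>y. G (x(j := s, i := y)))"
        by (rule intMi[OF upd_sp2[OF x j] Gm Gb])
      fix y
      have "G (x(i := y, j := t)) \<le> G (x(i := y, j := s))"
        by (rule insert.prems(6)[OF upd_sp[OF x] _ st]) (simp add: j)
      then show "G (x(j := t, i := y)) \<le> G (x(j := s, i := y))"
        using ji by (simp add: fun_upd_twist)
    qed
  qed
  have IH: "(\<integral>x. F1 x \<partial>?N) * (\<integral>x. G1 x \<partial>?N) \<le> (\<integral>x. F1 x * G1 x \<partial>?N)"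
    by (rule insert.IH[OF F1m G1m F1b G1b F1mono G1mono])
  have intF: "integrable ?N' F" by (rule bdd_integrable[OF PN' Fm insert.prems(3)])
  have intG: "integrable ?N' G" by (rule bdd_integrable[OF PN' Gm insert.prems(4)])
  have intFG: "integrable ?N' (\<lambda>x. F x * G x)" by (rule bdd_integrable[OF PN' FGm FGb])
  have eqF: "(\<integral>x. F x \<partial>?N') = (\<integral>x. F1 x \<partial>?N)"
    unfolding F1_def by (rule product_integral_insert[OF insert.hyps intF])
  have eqG: "(\<integral>x. G x \<partial>?N') = (\<integral>x. G1 x \<partial>?N)"
    unfolding G1_def by (rule product_integral_insert[OF insert.hyps intG])
  have eqFG: "(\<integral>x. F x * G x \<partial>?N') = (\<integral>x. (\<integral>y. F (x(i:=y)) * G (x(i:=y)) \<partial>M i) \<partial>?N)"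
    by (rule product_integral_insert[OF insert.hyps intFG])
  have "(\<integral>x. F1 x * G1 x \<partial>?N) \<le> (\<integral>x. (\<integral>y. F (x(i:=y)) * G (x(i:=y)) \<partial>M i) \<partial>?N)"
  proof (rule integral_mono)
    show "integrable ?N (\<lambda>x. F1 x * G1 x)"
      by (rule bdd_integrable[OF PN _, of _ "C * D"])
         (use F1m G1m F1b G1b in \<open>auto simp: abs_mult intro!: mult_mono order_trans[OF abs_ge_zero]\<close>)
    show "integrable ?N (\<lambda>x. \<integral>y. F (x(i:=y)) * G (x(i:=y)) \<partial>M i)"
      by (rule bdd_integrable[OF PN mint[OF FGm], of "C * D"])
         (rule abs_integral_le_prob[OF P intMi[OF _ FGm FGb]], auto intro: FGb upd_sp)
    fix x assume x: "x \<in> space ?N"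
    show "F1 x * G1 x \<le> (\<integral>y. F (x(i:=y)) * G (x(i:=y)) \<partial>M i)"
      unfolding F1_def G1_def
    proof (rule corr_1d[OF P S sym mb[OF x Fm] mb[OF x Gm]])
      show "\<bar>F (x(i := t))\<bar> \<le> C" for t by (rule insert.prems(3)[OF upd_sp[OF x]])
      show "\<bar>G (x(i := t))\<bar> \<le> D" for t by (rule insert.prems(4)[OF upd_sp[OF x]])
      show "F (x(i := t)) \<le> F (x(i := s))" if "(0 \<le> s \<and> s \<le> t) \<or> (t \<le> s \<and> s \<le> 0)" for s t
        using insert.prems(5)[OF upd_sp[OF x, of 0] _ that, of i] by (simp del: fun_upd_apply)
      show "G (x(i := t)) \<le> G (x(i := s))" if "\<bar>s\<bar> \<le> \<bar>t\<bar>" for s t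
        using insert.prems(6)[OF upd_sp[OF x, of 0] _ that, of i] by (simp del: fun_upd_apply)
    qed
  qed
  then show ?case using IH eqF eqG eqFG by simp
qed


lemma vec_lambda_measurable:
  "(\<lambda>g. (\<chi> i. g i) :: real ^ 'n) \<in> measurable (PiM (UNIV::'n::finite set) (\<lambda>_. lborel)) borel"
proof (subst borel_measurable_euclidean_space, intro ballI)
  fix b :: "real ^ 'n" assume "b \<in> Basis"
  then obtain j where b: "b = axis j 1" by (auto simp: Basis_vec_def)
  have "(\<lambda>g. (\<chi> i. g i) \<bullet> b) = (\<lambda>g. g j)" by (auto simp: b inner_axis)
  then show "(\<lambda>g. ((\<chi> i. g i) :: real ^ 'n) \<bullet> b) \<in> borel_measurable (PiM UNIV (\<lambda>_. lborel))"
    by simp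
qed

lemma lborel_cart:
  "(lborel :: (real ^ 'n::finite) measure) = distr (PiM UNIV (\<lambda>_. lborel)) borel (\<lambda>g. \<chi> i. g i)"
proof (rule lborel_eqI)
  interpret product_sigma_finite "\<lambda>_::'n. lborel :: real measure"
    by (simp add: product_sigma_finite_def lborel.sigma_finite_measure_axioms)
  fix l u :: "real ^ 'n" assume le: "\<And>b. b \<in> Basis \<Longrightarrow> l \<bullet> b \<le> u \<bullet> b"
  have le': "l $ i \<le> u $ i" for i using le[of "axis i 1"] by (auto simp: Basis_vec_def inner_axis)
  have pre: "(\<lambda>g. \<chi> i. g i) -` box l u \<inter> space (PiM UNIV (\<lambda>_::'n. lborel)) = PiE UNIV (\<lambda>i. {l $ i <..< u $ i})"
    by (auto simp: mem_box_cart space_PiM PiE_def Pi_iff)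
  have "emeasure (distr (PiM UNIV (\<lambda>_. lborel)) borel (\<lambda>g. \<chi> i. g i)) (box l u)
      = emeasure (PiM UNIV (\<lambda>_. lborel)) (PiE UNIV (\<lambda>i. {l $ i <..< u $ i}))"
    by (subst emeasure_distr) (auto simp: pre vec_lambda_measurable)
  also have "\<dots> = (\<Prod>i\<in>UNIV. emeasure lborel {l $ i <..< u $ i})"
    by (rule emeasure_PiM) auto
  also have "\<dots> = (\<Prod>i\<in>UNIV. ennreal (u $ i - l $ i))" using le' by simp
  also have "\<dots> = ennreal (\<Prod>i\<in>UNIV. u $ i - l $ i)" using le' by (simp add: prod_ennreal)
  also have "(\<Prod>i\<in>UNIV. u $ i - l $ i) = (\<Prod>b\<in>Basis. (u - l) \<bullet> b)"
    by (simp add: Basis_vec_def cart_eq_inner_axis axis_eq_axis prod.UNION_disjoint inner_diff_left)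
  finally show "emeasure (distr (PiM UNIV (\<lambda>_. lborel)) borel (\<lambda>g. \<chi> i. g i)) (box l u) = (\<Prod>b\<in>Basis. (u - l) \<bullet> b)" .
qed simp

lemma PiM_density:
  fixes r :: "'n::finite \<Rightarrow> real \<Rightarrow> real"
  assumes rm: "\<And>i. r i \<in> borel_measurable borel" and rn: "\<And>i t. 0 \<le> r i t"
    and P: "\<And>i. prob_space (density lborel (\<lambda>t. ennreal (r i t)))"
  shows "density (PiM UNIV (\<lambda>_. lborel)) (\<lambda>g. \<Prod>i\<in>UNIV. ennreal (r i (g i)))
       = PiM UNIV (\<lambda>i. density lborel (\<lambda>t. ennreal (r i t)))"
proof -
  interpret product_sigma_finite "\<lambda>i. density lborel (\<lambda>t. ennreal (r i t))"
    by (simp add: product_sigma_finite_def P prob_space_imp_sigma_finite)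
  interpret L: product_sigma_finite "\<lambda>_::'n. lborel :: real measure"
    by (simp add: product_sigma_finite_def lborel.sigma_finite_measure_axioms)
  show ?thesis
  proof (rule PiM_eqI)
    show "sets (density (PiM UNIV (\<lambda>_. lborel)) (\<lambda>g. \<Prod>i\<in>UNIV. ennreal (r i (g i))))
        = sets (PiM UNIV (\<lambda>i. density lborel (\<lambda>t. ennreal (r i t))))"
      by (simp cong: sets_PiM_cong)
    fix A assume A: "\<And>i. i \<in> UNIV \<Longrightarrow> A i \<in> sets (density lborel (\<lambda>t. ennreal (r i t)))"
    then have A': "A i \<in> sets borel" for i by simp
    have m: "(\<lambda>g. \<Prod>i\<in>UNIV. ennreal (r i (g i))) \<in> borel_measurable (PiM UNIV (\<lambda>_::'n. lborel))"
      using rm by measurable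
    have PA: "PiE UNIV A \<in> sets (PiM UNIV (\<lambda>_::'n. lborel))"
      by (rule sets_PiM_I_finite) (auto simp: A')
    have "emeasure (density (PiM UNIV (\<lambda>_. lborel)) (\<lambda>g. \<Prod>i\<in>UNIV. ennreal (r i (g i)))) (PiE UNIV A)
        = (\<integral>\<^sup>+ g. (\<Prod>i\<in>UNIV. ennreal (r i (g i))) * indicator (PiE UNIV A) g \<partial>PiM UNIV (\<lambda>_. lborel))"
      by (rule emeasure_density[OF m PA])
    also have "\<dots> = (\<integral>\<^sup>+ g. (\<Prod>i\<in>UNIV. ennreal (r i (g i)) * indicator (A i) (g i)) \<partial>PiM UNIV (\<lambda>_. lborel))"
      by (intro nn_integral_cong) (auto simp: prod.distrib indicator_def PiE_def Pi_iff)
    also have "\<dots> = (\<Prod>i\<in>UNIV. \<integral>\<^sup>+ t. ennreal (r i t) * indicator (A i) t \<partial>lborel)"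
      by (rule L.product_nn_integral_prod) (use rm A' in auto)
    also have "\<dots> = (\<Prod>i\<in>UNIV. emeasure (density lborel (\<lambda>t. ennreal (r i t))) (A i))"
      by (intro prod.cong refl emeasure_density[symmetric]) (use rm A' in auto)
    finally show "emeasure (density (PiM UNIV (\<lambda>_. lborel)) (\<lambda>g. \<Prod>i\<in>UNIV. ennreal (r i (g i)))) (PiE UNIV A)
        = (\<Prod>i\<in>UNIV. emeasure (density lborel (\<lambda>t. ennreal (r i t))) (A i))" .
  qed simp
qed


lemma C1_mono:
  assumes g: "g \<in> C1" and st: "(0 \<le> s \<and> s \<le> t) \<or> (t \<le> s \<and> s \<le> 0)"
  shows "g t \<le> g s"
proof (rule ccontr)
  assume "\<not> g t \<le> g s"
  then have lt: "g s < g t" by simp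
  have nn: "\<And>x. g x \<ge> 0" and cv: "\<And>c. c > 0 \<Longrightarrow> convex {x. g x > c}" and mx: "\<And>x. g x \<le> g 0"
    using g by (auto simp: C1_def)
  define c where "c = (g s + g t) / 2"
  have c0: "c > 0" using nn[of s] lt by (simp add: c_def)
  have iv: "is_interval {x. g x > c}" using cv[OF c0] by (simp add: is_interval_convex_1)
  have t_in: "g t > c" using lt by (simp add: c_def)
  have z_in: "g 0 > c" using t_in mx[of t] by simp
  have "g s > c"
  proof (cases "0 \<le> s \<and> s \<le> t")
    case True then show ?thesis using iv z_in t_in unfolding is_interval_1 by blast
  next
    case False then have "t \<le> s \<and> s \<le> 0" using st by auto
    then show ?thesis using iv z_in t_in unfolding is_interval_1 by blast
  qed
  then show False using lt by (simp add: c_def)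
qed

lemma upd_vec: "(\<chi> i. (x(j:=t)) i) = upd_coord (\<chi> i. x i) j t"
  by (simp add: upd_coord_def vec_eq_iff)

lemma sym_density:
  fixes g :: "real \<Rightarrow> real"
  assumes gm: "g \<in> borel_measurable borel" and ev: "\<And>t. g (- t) = g t"
  shows "distr (density lborel (\<lambda>t. ennreal (g t))) borel uminus = density lborel (\<lambda>t. ennreal (g t))"
proof -
  have "density (distr lborel borel uminus) (\<lambda>t. ennreal (g t))
      = distr (density lborel (\<lambda>x. ennreal (g (- x)))) borel uminus"
    by (rule density_distr) (use gm in auto)
  then show ?thesis using ev by (simp add: lborel_distr_uminus)
qed


theorem mainTheorem8:
  fixes \<rho> \<phi> :: "'n::finite \<Rightarrow> real \<Rightarrow> real" and f :: "real ^ 'n \<Rightarrow> real"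
  assumes rho_cont: "\<And>i. continuous_on {0..} (\<rho> i)"
      and rho_pos: "\<And>i t. t \<ge> 0 \<Longrightarrow> \<rho> i t > 0"
      and rho_prob: "\<And>i. prob_space (density lborel (\<lambda>t. ennreal (\<rho> i \<bar>t\<bar>)))"
      and phi_cont: "\<And>i. continuous_on {0..} (\<phi> i)"
      and phi_mono: "\<And>i. strict_mono_on {0..} (\<phi> i)"
      and phi_nonneg: "\<And>i t. t \<ge> 0 \<Longrightarrow> \<phi> i t \<ge> 0"
      and phi0: "\<And>i. \<phi> i 0 = 0"
      and f: "f \<in> Cbar"
  defines "\<mu> \<equiv> density lborel (\<lambda>x. ennreal (\<Prod>i\<in>UNIV. \<rho> i \<bar>x $ i\<bar>))"
      and "B \<equiv> {x :: real ^ 'n. (\<Sum>i\<in>UNIV. \<phi> i \<bar>x $ i\<bar>) \<le> 1}"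
  shows "(\<integral>x. f x * indicator B x \<partial>\<mu>) \<ge> (\<integral>x. f x \<partial>\<mu>) * measure \<mu> B"
proof -
  define V where "V = (\<lambda>g. (\<chi> i. g i) :: real ^ 'n)"
  define M where "M = (\<lambda>i. density lborel (\<lambda>t. ennreal (\<rho> i \<bar>t\<bar>)))"
  define Q where "Q = PiM UNIV M"
  define P0 where "P0 = PiM (UNIV :: 'n set) (\<lambda>_. lborel :: real measure)"
  have rc: "continuous_on UNIV (\<lambda>t. \<rho> i \<bar>t\<bar>)" for i
    by (rule continuous_on_compose2[OF rho_cont[of i] continuous_on_rabs[OF continuous_on_id]]) auto
  have rm[measurable]: "(\<lambda>t. \<rho> i \<bar>t\<bar>) \<in> borel_measurable borel" for i
    by (rule borel_measurable_continuous_onI[OF rc])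
  have pc: "continuous_on UNIV (\<lambda>t. \<phi> i \<bar>t\<bar>)" for i
    by (rule continuous_on_compose2[OF phi_cont[of i] continuous_on_rabs[OF continuous_on_id]]) auto
  have Vm0: "V \<in> measurable P0 borel" unfolding V_def P0_def by (rule vec_lambda_measurable)
  have setsQ: "sets Q = sets P0" unfolding Q_def P0_def M_def by (simp cong: sets_PiM_cong)
  have VmQ: "V \<in> measurable Q borel" using Vm0 by (simp add: measurable_cong_sets[OF setsQ refl])
  define h where "h = (\<lambda>x :: real ^ 'n. ennreal (\<Prod>i\<in>UNIV. \<rho> i \<bar>x $ i\<bar>))"
  have hc: "continuous_on UNIV (\<lambda>x :: real ^ 'n. \<Prod>i\<in>UNIV. \<rho> i \<bar>x $ i\<bar>)"
    by (intro continuous_on_prod ballI continuous_on_compose2[OF rc continuous_on_component[OF continuous_on_id]]) auto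
  have hm: "h \<in> borel_measurable borel"
    unfolding h_def using borel_measurable_continuous_onI[OF hc] by measurable
  have mu_eq: "\<mu> = distr Q borel V"
  proof -
    have "\<mu> = density (distr P0 borel V) h"
      unfolding \<mu>_def h_def P0_def V_def by (simp add: lborel_cart[symmetric])
    also have "\<dots> = distr (density P0 (\<lambda>g. h (V g))) borel V"
      by (rule density_distr[OF hm Vm0])
    also have "(\<lambda>g. h (V g)) = (\<lambda>g. \<Prod>i\<in>UNIV. ennreal (\<rho> i \<bar>g i\<bar>))"
      by (auto simp: h_def V_def prod_ennreal less_imp_le[OF rho_pos])
    also have "density P0 (\<lambda>g. \<Prod>i\<in>UNIV. ennreal (\<rho> i \<bar>g i\<bar>)) = Q"
      unfolding P0_def Q_def M_def
      by (rule PiM_density[of "\<lambda>i t. \<rho> i \<bar>t\<bar>", OF rm less_imp_le[OF rho_pos] rho_prob]) auto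
    finally show ?thesis .
  qed
  have fc: "continuous_on UNIV f" and fcs: "compact_supp f" and fC1: "\<And>i x. (\<lambda>t. f (upd_coord x i t)) \<in> C1"
    using f unfolding Cbar_def by blast+
  have fm[measurable]: "f \<in> borel_measurable borel" by (rule borel_measurable_continuous_onI[OF fc])
  obtain C where fb: "\<And>x. \<bar>f x\<bar> \<le> C"
  proof -
    let ?K = "closure {x. f x \<noteq> 0}"
    have "compact ?K" using fcs by (simp add: compact_supp_def)
    then have "compact (f ` ?K)" by (intro compact_continuous_image continuous_on_subset[OF fc]) auto
    then obtain C where C: "\<And>y. y \<in> f ` ?K \<Longrightarrow> norm y \<le> C"
      using compact_imp_bounded bounded_iff by metis
    have "\<bar>f x\<bar> \<le> max C 0" for x
    proof (cases "x \<in> ?K")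
      case True
      then have "f x \<in> f ` ?K" by (rule imageI)
      then have "norm (f x) \<le> C" by (rule C)
      then show ?thesis by simp
    next
      case False
      have "x \<notin> {x. f x \<noteq> 0}"
      proof
        assume "x \<in> {x. f x \<noteq> 0}"
        then have "x \<in> ?K" by (rule closure_subset[THEN subsetD])
        with False show False by simp
      qed
      then show ?thesis by simp
    qed
    then show ?thesis by (rule that)
  qed
  have Bc: "continuous_on UNIV (\<lambda>x :: real ^ 'n. \<Sum>i\<in>UNIV. \<phi> i \<bar>x $ i\<bar>)"
    by (intro continuous_on_sum ballI continuous_on_compose2[OF pc continuous_on_component[OF continuous_on_id]]) auto
  note Bm0[measurable] = borel_measurable_continuous_onI[OF Bc]
  have Bs[measurable]: "B \<in> sets borel"
  proof -
    have "{x \<in> space borel. (\<Sum>i\<in>UNIV. \<phi> i \<bar>x $ i\<bar>) \<le> 1} \<in> sets borel" by measurable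
    then show ?thesis by (simp add: B_def)
  qed
  have phle: "\<phi> i a \<le> \<phi> i b" if "0 \<le> a" "a \<le> b" for i a b
  proof (cases "a = b")
    case False then have "a < b" using that by simp
    then show ?thesis using strict_mono_onD[OF phi_mono[of i], of a b] that by simp
  qed simp
  have Bmono: "indicator B (upd_coord y j t) \<le> (indicator B (upd_coord y j s) :: real)"
    if st: "\<bar>s\<bar> \<le> \<bar>t\<bar>" for y j s t
  proof (cases "upd_coord y j t \<in> B")
    case True
    have "(\<Sum>i\<in>UNIV. \<phi> i \<bar>upd_coord y j s $ i\<bar>) \<le> (\<Sum>i\<in>UNIV. \<phi> i \<bar>upd_coord y j t $ i\<bar>)"
      by (rule sum_mono) (auto simp: upd_coord_def phle st)
    then have "upd_coord y j s \<in> B" using True by (simp add: B_def)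
    then show ?thesis by simp
  qed simp
  have S: "sets (M i) = sets borel" for i by (simp add: M_def)
  have Msym: "distr (M i) borel uminus = M i" for i
    unfolding M_def by (rule sym_density) auto
  have Fm: "(\<lambda>g. f (V g)) \<in> borel_measurable Q"
    using measurable_comp[OF VmQ fm] by (simp add: comp_def)
  have Gm: "(\<lambda>g. indicator B (V g) :: real) \<in> borel_measurable Q"
    using VmQ by measurable
  have main: "(\<integral>g. f (V g) \<partial>Q) * (\<integral>g. indicator B (V g) \<partial>Q) \<le> (\<integral>g. f (V g) * indicator B (V g) \<partial>Q)"
    unfolding Q_def
  proof (rule corr_PiM[where C=C and D=1])
    show "prob_space (M i)" for i unfolding M_def by (rule rho_prob)
    show "(\<lambda>g. f (V g)) \<in> borel_measurable (PiM UNIV M)" using Fm by (simp add: Q_def)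
    show "(\<lambda>g. indicator B (V g) :: real) \<in> borel_measurable (PiM UNIV M)" using Gm by (simp add: Q_def)
    show "\<bar>f (V x)\<bar> \<le> C" for x by (rule fb)
    show "\<bar>indicator B (V x) :: real\<bar> \<le> 1" for x by (simp add: indicator_def)
    show "f (V (x(j := t))) \<le> f (V (x(j := s)))"
      if "(0 \<le> s \<and> s \<le> t) \<or> (t \<le> s \<and> s \<le> 0)" for x j s t
      using C1_mono[OF fC1[of "V x" j] that] by (simp add: V_def upd_vec)
    show "indicator B (V (x(j := t))) \<le> (indicator B (V (x(j := s))) :: real)"
      if "\<bar>s\<bar> \<le> \<bar>t\<bar>" for x j s t
      using Bmono[OF that, of "V x" j] by (simp add: V_def upd_vec)
  qed (auto simp: S Msym)
  have e1: "(\<integral>x. f x * indicator B x \<partial>\<mu>) = (\<integral>g. f (V g) * indicator B (V g) \<partial>Q)"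
    unfolding mu_eq by (rule integral_distr[OF VmQ]) measurable
  have e2: "(\<integral>x. f x \<partial>\<mu>) = (\<integral>g. f (V g) \<partial>Q)"
    unfolding mu_eq by (rule integral_distr[OF VmQ fm])
  have e3: "measure \<mu> B = (\<integral>g. indicator B (V g) \<partial>Q)"
  proof -
    have "measure \<mu> B = (\<integral>x. indicator B x \<partial>\<mu>)" by (simp add: \<mu>_def)
    also have "\<dots> = (\<integral>g. indicator B (V g) \<partial>Q)"
      unfolding mu_eq by (rule integral_distr[OF VmQ]) measurable
    finally show ?thesis .
  qed
  show ?thesis using main e1 e2 e3 by simp
qed

end
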